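(* In the setting described in the context, define $$\mathcal{H}=(\mathcal{Q}+Q)^{\theta}_{(0)}-(\mathcal{P}+P)^{\theta}_{(0)}-pnl.$$ Then $\mathrm{HVA}=va(\mathcal{H}+K^{\theta})$, where $K$ is the drift of $\mathcal{Q}+Q$.
   Context: Let $(\Omega,\mathcal{A},\mathbb{Q})$ be a probability space with a filtration $\mathfrak{F}=(\mathfrak{F}_t)_{0\le t\le T}$ satisfying the usual conditions; $\mathbb{E}_t$ is conditional expectation given $\mathfrak{F}_t$. All processes are adapted, càdlàg, and integrable enough for the conditional expectations below to exist. For an integrable adapted process $X$, $va(X)_t=\mathbb{E}_t[X_T-X_t]$. A cash flow is an optional integrable process $\mathcal{Y}$ with $\mathcal{Y}_0=0$; its fair callable value is $\widetilde{va}(\mathcal{Y})_t=\sup_{\tau\in\mathcal{T}^t}\mathbb{E}_t[\mathcal{Y}_\tau-\mathcal{Y}_t]$, where $\mathcal{T}^t$ is the set of $[t,T]$-valued stopping times. Notation: $X_{(0)}=X-X_0$; $X^\theta$ is $X$ stopped at $\theta$. Data: a cash flow $\mathcal{Q}$ with fair callable value $Q=\widetilde{va}(\mathcal{Q})$; $K$ is the drift of the supermartingale $\mathcal{Q}+Q$, i.e. the unique nondecreasing integrable predictable process with $K_0=0$ such that $\mathcal{Q}+Q+K$ is a martingale on $[0,T]$; a cash flow $\mathcal{P}$ with fair value $P=va(\mathcal{P})$; semimartingales $q,p$ with $q_T=0$; stopping times $\tau_s,\theta$ with values in $[0,T]$; a martingale $h$ with $h=h^\theta$. Set $J^s=\mathbf{1}_{[0,\tau_s)}$,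 $J^e=\mathbf{1}_{[0,\theta)}$ and $$pnl=(\mathcal{Q}+J^sq+(1-J^s)Q)^{\theta}_{(0)}-(\mathcal{P}+J^sp+(1-J^s)P)^{\theta}_{(0)}-h-(1-J^e)\big(J^s_\theta q_\theta+(1-J^s_\theta)Q_\theta\big),$$ and $\mathrm{HVA}=-va(pnl)$. *)

theory Defs
  imports "HOL-Probability.Probability"
begin

text \<open>Time is real, processes are maps \<open>real \<Rightarrow> 'a \<Rightarrow> real\<close>, only the
  values on [0,T] matter. \<open>F t\<close> is the sigma-algebra at time t.\<close>

definition filtration_usual :: "'a measure \<Rightarrow> (real \<Rightarrow> 'a measure) \<Rightarrow> real \<Rightarrow> bool" where
  "filtration_usual M F T \<longleftrightarrow>
     (\<forall>t\<in>{0..T}. subalgebra M (F t)) \<and>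
     (\<forall>s t. 0 \<le> s \<and> s \<le> t \<and> t \<le> T \<longrightarrow> sets (F s) \<subseteq> sets (F t)) \<and>
     \<comment> \<open>usual conditions: completeness\<close>
     (\<forall>N\<in>null_sets M. \<forall>A. A \<subseteq> N \<longrightarrow> A \<in> sets (F 0)) \<and>
     \<comment> \<open>usual conditions: right-continuity\<close>
     (\<forall>t\<in>{0..<T}. sets (F t) = \<Inter>{sets (F s) | s. t < s \<and> s \<le> T})"

definition adapted :: "(real \<Rightarrow> 'a measure) \<Rightarrow> real \<Rightarrow> (real \<Rightarrow> 'a \<Rightarrow> real) \<Rightarrow> bool" where
  "adapted F T X \<longleftrightarrow> (\<forall>t\<in>{0..T}. X t \<in> borel_measurable (F t))"

definition cadlag :: "'a measure \<Rightarrow> real \<Rightarrow> (real \<Rightarrow> 'a \<Rightarrow> real) \<Rightarrow> bool" where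
  "cadlag M T X \<longleftrightarrow> (\<forall>\<omega>\<in>space M.
     (\<forall>t\<in>{0..<T}. continuous (at t within {t..T}) (\<lambda>s. X s \<omega>)) \<and>
     (\<forall>t\<in>{0<..T}. \<exists>l. ((\<lambda>s. X s \<omega>) \<longlongrightarrow> l) (at t within {0..<t})))"

definition integrable_process :: "'a measure \<Rightarrow> real \<Rightarrow> (real \<Rightarrow> 'a \<Rightarrow> real) \<Rightarrow> bool" where
  "integrable_process M T X \<longleftrightarrow> (\<forall>t\<in>{0..T}. integrable M (X t))"

definition stopping_time_on :: "'a measure \<Rightarrow> (real \<Rightarrow> 'a measure) \<Rightarrow> real \<Rightarrow> ('a \<Rightarrow> real) \<Rightarrow> bool" where
  "stopping_time_on M F T \<tau> \<longleftrightarrow>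
     (\<forall>\<omega>\<in>space M. \<tau> \<omega> \<in> {0..T}) \<and>
     (\<forall>t\<in>{0..T}. {\<omega>\<in>space M. \<tau> \<omega> \<le> t} \<in> sets (F t))"

definition stopped :: "('a \<Rightarrow> real) \<Rightarrow> (real \<Rightarrow> 'a \<Rightarrow> real) \<Rightarrow> real \<Rightarrow> 'a \<Rightarrow> real" where
  "stopped \<theta> X = (\<lambda>t \<omega>. X (min t (\<theta> \<omega>)) \<omega>)"

definition from0 :: "(real \<Rightarrow> 'a \<Rightarrow> real) \<Rightarrow> real \<Rightarrow> 'a \<Rightarrow> real" where
  "from0 X = (\<lambda>t \<omega>. X t \<omega> - X 0 \<omega>)"

definition martingale_on :: "'a measure \<Rightarrow> (real \<Rightarrow> 'a measure) \<Rightarrow> real \<Rightarrow> (real \<Rightarrow> 'a \<Rightarrow> real) \<Rightarrow> bool" where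
  "martingale_on M F T X \<longleftrightarrow> adapted F T X \<and> integrable_process M T X \<and>
     (\<forall>s t. 0 \<le> s \<and> s \<le> t \<and> t \<le> T \<longrightarrow>
        (AE \<omega> in M. real_cond_exp M (F s) (X t) \<omega> = X s \<omega>))"

definition local_martingale_on :: "'a measure \<Rightarrow> (real \<Rightarrow> 'a measure) \<Rightarrow> real \<Rightarrow> (real \<Rightarrow> 'a \<Rightarrow> real) \<Rightarrow> bool" where
  "local_martingale_on M F T X \<longleftrightarrow> adapted F T X \<and> cadlag M T X \<and>
     (\<exists>\<sigma> :: nat \<Rightarrow> 'a \<Rightarrow> real. (\<forall>n. stopping_time_on M F T (\<sigma> n)) \<and>
        (\<forall>\<omega>\<in>space M. mono (\<lambda>n. \<sigma> n \<omega>)) \<and>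
        (AE \<omega> in M. \<exists>n. \<sigma> n \<omega> = T) \<and>
        (\<forall>n. martingale_on M F T (stopped (\<sigma> n) X)))"

definition bounded_variation_on :: "(real \<Rightarrow> real) \<Rightarrow> real \<Rightarrow> real \<Rightarrow> bool" where
  "bounded_variation_on f a b \<longleftrightarrow> (\<exists>B. \<forall>(n::nat) (u::nat \<Rightarrow> real).
     a \<le> u 0 \<and> u n \<le> b \<and> (\<forall>i<n. u i \<le> u (Suc i)) \<longrightarrow>
     (\<Sum>i<n. \<bar>f (u (Suc i)) - f (u i)\<bar>) \<le> B)"

definition semimartingale_on :: "'a measure \<Rightarrow> (real \<Rightarrow> 'a measure) \<Rightarrow> real \<Rightarrow> (real \<Rightarrow> 'a \<Rightarrow> real) \<Rightarrow> bool" where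
  "semimartingale_on M F T X \<longleftrightarrow> adapted F T X \<and> cadlag M T X \<and>
     (\<exists>L A. local_martingale_on M F T L \<and> adapted F T A \<and> cadlag M T A \<and>
        (\<forall>\<omega>\<in>space M. bounded_variation_on (\<lambda>t. A t \<omega>) 0 T) \<and>
        (\<forall>t\<in>{0..T}. \<forall>\<omega>\<in>space M. X t \<omega> = X 0 \<omega> + L t \<omega> + A t \<omega>))"

definition predictable_sigma :: "'a measure \<Rightarrow> (real \<Rightarrow> 'a measure) \<Rightarrow> real \<Rightarrow> (real \<times> 'a) measure" where
  "predictable_sigma M F T = sigma ({0..T} \<times> space M)
     ({{0} \<times> A | A. A \<in> sets (F 0)} \<union>
      {{s<..t} \<times> A | s t A. 0 \<le> s \<and> s < t \<and> t \<le> T \<and> A \<in> sets (F s)})"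

definition predictable :: "'a measure \<Rightarrow> (real \<Rightarrow> 'a measure) \<Rightarrow> real \<Rightarrow> (real \<Rightarrow> 'a \<Rightarrow> real) \<Rightarrow> bool" where
  "predictable M F T X \<longleftrightarrow> (\<lambda>p. X (fst p) (snd p)) \<in> borel_measurable (predictable_sigma M F T)"

definition va :: "'a measure \<Rightarrow> (real \<Rightarrow> 'a measure) \<Rightarrow> real \<Rightarrow> (real \<Rightarrow> 'a \<Rightarrow> real) \<Rightarrow> real \<Rightarrow> 'a \<Rightarrow> real" where
  "va M F T X = (\<lambda>t. real_cond_exp M (F t) (\<lambda>\<omega>. X T \<omega> - X t \<omega>))"

definition is_ess_sup :: "'a measure \<Rightarrow> 'a measure \<Rightarrow> ('a \<Rightarrow> real) set \<Rightarrow> ('a \<Rightarrow> real) \<Rightarrow> bool" where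
  "is_ess_sup M G S Y \<longleftrightarrow> Y \<in> borel_measurable G \<and>
     (\<forall>X\<in>S. AE \<omega> in M. X \<omega> \<le> Y \<omega>) \<and>
     (\<forall>Z\<in>borel_measurable G. (\<forall>X\<in>S. AE \<omega> in M. X \<omega> \<le> Z \<omega>) \<longrightarrow> (AE \<omega> in M. Y \<omega> \<le> Z \<omega>))"

definition cash_flow :: "'a measure \<Rightarrow> (real \<Rightarrow> 'a measure) \<Rightarrow> real \<Rightarrow> (real \<Rightarrow> 'a \<Rightarrow> real) \<Rightarrow> bool" where
  "cash_flow M F T Y \<longleftrightarrow> adapted F T Y \<and> cadlag M T Y \<and> integrable_process M T Y \<and>
     (\<forall>\<omega>\<in>space M. Y 0 \<omega> = 0)"

definition is_callable_value :: "'a measure \<Rightarrow> (real \<Rightarrow> 'a measure) \<Rightarrow> real \<Rightarrow> (real \<Rightarrow> 'a \<Rightarrow> real) \<Rightarrow> (real \<Rightarrow> 'a \<Rightarrow> real) \<Rightarrow> bool" where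
  "is_callable_value M F T Y Q \<longleftrightarrow> (\<forall>t\<in>{0..T}. is_ess_sup M (F t)
     {real_cond_exp M (F t) (\<lambda>\<omega>. Y (\<tau> \<omega>) \<omega> - Y t \<omega>) | \<tau>.
        stopping_time_on M F T \<tau> \<and> (\<forall>\<omega>\<in>space M. t \<le> \<tau> \<omega>)} (Q t))"

definition is_fair_value :: "'a measure \<Rightarrow> (real \<Rightarrow> 'a measure) \<Rightarrow> real \<Rightarrow> (real \<Rightarrow> 'a \<Rightarrow> real) \<Rightarrow> (real \<Rightarrow> 'a \<Rightarrow> real) \<Rightarrow> bool" where
  "is_fair_value M F T Y P \<longleftrightarrow> (\<forall>t\<in>{0..T}. AE \<omega> in M. P t \<omega> = va M F T Y t \<omega>)"

definition is_drift :: "'a measure \<Rightarrow> (real \<Rightarrow> 'a measure) \<Rightarrow> real \<Rightarrow> (real \<Rightarrow> 'a \<Rightarrow> real) \<Rightarrow> (real \<Rightarrow> 'a \<Rightarrow> real) \<Rightarrow> bool" where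
  "is_drift M F T X K \<longleftrightarrow> adapted F T K \<and> cadlag M T K \<and> integrable_process M T K \<and>
     predictable M F T K \<and> (\<forall>\<omega>\<in>space M. K 0 \<omega> = 0) \<and>
     (\<forall>\<omega>\<in>space M. mono_on {0..T} (\<lambda>t. K t \<omega>)) \<and>
     martingale_on M F T (\<lambda>t \<omega>. X t \<omega> + K t \<omega>)"

definition ind_before :: "('a \<Rightarrow> real) \<Rightarrow> real \<Rightarrow> 'a \<Rightarrow> real" where
  "ind_before \<tau> = (\<lambda>t \<omega>. if t < \<tau> \<omega> then 1 else 0)"

definition pnl :: "('a \<Rightarrow> real) \<Rightarrow> ('a \<Rightarrow> real) \<Rightarrow> (real \<Rightarrow> 'a \<Rightarrow> real) \<Rightarrow> (real \<Rightarrow> 'a \<Rightarrow> real) \<Rightarrow>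
    (real \<Rightarrow> 'a \<Rightarrow> real) \<Rightarrow> (real \<Rightarrow> 'a \<Rightarrow> real) \<Rightarrow> (real \<Rightarrow> 'a \<Rightarrow> real) \<Rightarrow> (real \<Rightarrow> 'a \<Rightarrow> real) \<Rightarrow>
    (real \<Rightarrow> 'a \<Rightarrow> real) \<Rightarrow> real \<Rightarrow> 'a \<Rightarrow> real" where
  "pnl \<tau>s \<theta> CQ Q CP P q p h = (\<lambda>t \<omega>.
     let Js = ind_before \<tau>s; Je = ind_before \<theta> in
     from0 (stopped \<theta> (\<lambda>t \<omega>. CQ t \<omega> + Js t \<omega> * q t \<omega> + (1 - Js t \<omega>) * Q t \<omega>)) t \<omega>
   - from0 (stopped \<theta> (\<lambda>t \<omega>. CP t \<omega> + Js t \<omega> * p t \<omega> + (1 - Js t \<omega>) * P t \<omega>)) t \<omega>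
   - h t \<omega>
   - (1 - Je t \<omega>) * (Js (\<theta> \<omega>) \<omega> * q (\<theta> \<omega>) \<omega> + (1 - Js (\<theta> \<omega>) \<omega>) * Q (\<theta> \<omega>) \<omega>))"

definition HVA :: "'a measure \<Rightarrow> (real \<Rightarrow> 'a measure) \<Rightarrow> real \<Rightarrow> ('a \<Rightarrow> real) \<Rightarrow> ('a \<Rightarrow> real) \<Rightarrow>
    (real \<Rightarrow> 'a \<Rightarrow> real) \<Rightarrow> (real \<Rightarrow> 'a \<Rightarrow> real) \<Rightarrow> (real \<Rightarrow> 'a \<Rightarrow> real) \<Rightarrow> (real \<Rightarrow> 'a \<Rightarrow> real) \<Rightarrow>
    (real \<Rightarrow> 'a \<Rightarrow> real) \<Rightarrow> (real \<Rightarrow> 'a \<Rightarrow> real) \<Rightarrow> (real \<Rightarrow> 'a \<Rightarrow> real) \<Rightarrow> real \<Rightarrow> 'a \<Rightarrow> real" where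
  "HVA M F T \<tau>s \<theta> CQ Q CP P q p h = (\<lambda>t \<omega>. - va M F T (pnl \<tau>s \<theta> CQ Q CP P q p h) t \<omega>)"

end

theory Submission
  imports Defs
begin


lemma sfs:
  assumes "prob_space M" "subalgebra M G"
  shows "sigma_finite_subalgebra M G"
proof -
  interpret prob_space M by fact
  have "finite_measure_subalgebra M G"
    by (unfold_locales) (use assms(2) in auto)
  then show ?thesis by (rule finite_measure_subalgebra_is_sigma_finite)
qed

lemma tail_lim:
  fixes f :: "'a \<Rightarrow> real"
  assumes "integrable M f"
  shows "(\<lambda>n::nat. \<integral>\<omega>. (if real n < \<bar>f \<omega>\<bar> then \<bar>f \<omega>\<bar> else 0) \<partial>M) \<longlonglongrightarrow> 0"
proof -
  have fm[measurable]: "f \<in> borel_measurable M" using assms by auto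
  have "(\<lambda>n::nat. \<integral>\<omega>. (if real n < \<bar>f \<omega>\<bar> then \<bar>f \<omega>\<bar> else 0) \<partial>M) \<longlonglongrightarrow> (\<integral>\<omega>. 0 \<partial>M)"
  proof (rule integral_dominated_convergence[where w="\<lambda>\<omega>. \<bar>f \<omega>\<bar>"])
    show "integrable M (\<lambda>\<omega>. \<bar>f \<omega>\<bar>)" using assms by auto
    show "AE x in M. (\<lambda>i. if real i < \<bar>f x\<bar> then \<bar>f x\<bar> else 0) \<longlonglongrightarrow> 0"
    proof (intro AE_I2 tendsto_eventually)
      fix x
      obtain N :: nat where "\<bar>f x\<bar> \<le> real N" using real_arch_simple by blast
      then show "\<forall>\<^sub>F i in sequentially. (if real i < \<bar>f x\<bar> then \<bar>f x\<bar> else 0) = 0"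
        unfolding eventually_sequentially by (intro exI[of _ N]) auto
    qed
  qed auto
  then show ?thesis by simp
qed

lemma stopping_meas:
  assumes "stopping_time_on M F T \<sigma>" "\<forall>t\<in>{0..T}. subalgebra M (F t)"
  shows "\<sigma> \<in> borel_measurable M"
proof (rule borel_measurableI_le)
  fix y
  show "{x \<in> space M. \<sigma> x \<le> y} \<in> sets M"
  proof (cases "y < 0")
    case True
    have "\<forall>x\<in>space M. \<not> \<sigma> x \<le> y" using assms(1) True unfolding stopping_time_on_def by force
    then have "{x \<in> space M. \<sigma> x \<le> y} = {}" by auto
    then show ?thesis by (metis sets.empty_sets)
  next
    case False
    show ?thesis
    proof (cases "y \<le> T")
      case True
      then have "{x \<in> space M. \<sigma> x \<le> y} \<in> sets (F y)" using assms(1) False unfolding stopping_time_on_def by auto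
      then show ?thesis using assms(2) True False unfolding subalgebra_def by auto
    next
      case False
      then have "{x \<in> space M. \<sigma> x \<le> y} = space M" using assms(1) unfolding stopping_time_on_def by force
      then show ?thesis by (metis sets.top)
    qed
  qed
qed



lemma grid_facts:
  fixes T s :: real and n :: nat
  assumes "0 < T" "0 \<le> s" "s \<le> T"
  defines "k \<equiv> \<lceil>s * 2^n / T\<rceil>"
  shows "0 \<le> k" "k \<le> 2^n" "s \<le> T * of_int k / 2^n" "T * of_int k / 2^n < s + T / 2^n"
    "T * of_int k / 2^n \<le> T"
proof -
  have p: "(0::real) < 2^n" by simp
  have a: "0 \<le> s * 2^n / T" using assms by simp
  have b: "s * 2^n / T \<le> 2^n" using assms(1-3) p by (simp add: field_simps)
  show k0: "0 \<le> k" unfolding k_def using a by simp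
  show k1: "k \<le> 2^n" unfolding k_def using b
    by (metis ceiling_le_iff of_int_numeral of_int_power)
  have c1: "s * 2^n / T \<le> of_int k" unfolding k_def by (rule le_of_int_ceiling)
  have c2: "of_int k < s * 2^n / T + 1" unfolding k_def using ceiling_correct[of "s * 2^n / T"] by linarith
  show "s \<le> T * of_int k / 2^n" using c1 assms(1-3) p by (simp add: field_simps)
  show "T * of_int k / 2^n < s + T / 2^n" using c2 assms(1-3) p by (simp add: field_simps)
  have "real_of_int k \<le> 2^n" using k1
    by (metis of_int_le_iff of_int_numeral of_int_power)
  then show "T * of_int k / 2^n \<le> T" using assms(1-3) p by (simp add: field_simps)
qed

lemma grid_eq_iff:
  fixes T s :: real
  assumes "0 < T"
  shows "\<lceil>s * 2^n / T\<rceil> = k \<longleftrightarrow> T * of_int (k - 1) / 2^n < s \<and> s \<le> T * of_int k / 2^n"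
proof -
  have p: "(0::real) < 2^n" by simp
  have "\<lceil>s * 2^n / T\<rceil> = k \<longleftrightarrow> of_int k - 1 < s * 2^n / T \<and> s * 2^n / T \<le> of_int k"
    by (rule ceiling_eq_iff)
  also have "\<dots> \<longleftrightarrow> T * of_int (k - 1) / 2^n < s \<and> s \<le> T * of_int k / 2^n"
    using assms p by (simp add: field_simps)
  finally show ?thesis .
qed



lemma ost_core:
  fixes X :: "real \<Rightarrow> 'a \<Rightarrow> real"
  assumes ps: "prob_space M" and T0: "0 < T"
    and sub: "\<forall>t\<in>{0..T}. subalgebra M (F t)"
    and mono: "\<forall>s t. 0 \<le> s \<and> s \<le> t \<and> t \<le> T \<longrightarrow> sets (F s) \<subseteq> sets (F t)"
    and adp: "\<forall>t\<in>{0..T}. X t \<in> borel_measurable (F t)"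
    and int: "\<forall>t\<in>{0..T}. integrable M (X t)"
    and mart: "\<forall>s\<in>{0..T}. \<forall>C\<in>sets (F s). (\<integral>\<omega>. indicator C \<omega> * X s \<omega> \<partial>M) = (\<integral>\<omega>. indicator C \<omega> * X T \<omega> \<partial>M)"
    and st: "stopping_time_on M F T \<sigma>"
  shows "\<forall>n. (\<integral>\<omega>. X (T * real_of_int \<lceil>\<sigma> \<omega> * 2^n / T\<rceil> / 2^n) \<omega> \<partial>M) = (\<integral>\<omega>. X T \<omega> \<partial>M)"
    and "\<forall>n c. (\<integral>\<omega>. indicator {\<omega>\<in>space M. c < \<bar>X (T * real_of_int \<lceil>\<sigma> \<omega> * 2^n / T\<rceil> / 2^n) \<omega>\<bar>} \<omega> *
                     \<bar>X (T * real_of_int \<lceil>\<sigma> \<omega> * 2^n / T\<rceil> / 2^n) \<omega>\<bar> \<partial>M)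
              \<le> (\<integral>\<omega>. indicator {\<omega>\<in>space M. c < \<bar>X (T * real_of_int \<lceil>\<sigma> \<omega> * 2^n / T\<rceil> / 2^n) \<omega>\<bar>} \<omega> * \<bar>X T \<omega>\<bar> \<partial>M)"
    and "\<forall>n. integrable M (\<lambda>\<omega>. X (T * real_of_int \<lceil>\<sigma> \<omega> * 2^n / T\<rceil> / 2^n) \<omega>)"
proof -
  interpret prob_space M by fact
  define D where "D n \<omega> = \<lceil>\<sigma> \<omega> * 2^n / T\<rceil>" for n :: nat and \<omega>
  define tt where "tt n k = T * real_of_int k / 2^n" for n :: nat and k :: int
  define Y where "Y n \<omega> = X (tt n (D n \<omega>)) \<omega>" for n \<omega>
  define E where "E n k = {\<omega>\<in>space M. D n \<omega> = k}" for n k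
  define K where "K n = {0..(2::int)^n}" for n :: nat
  have finK: "finite (K n)" for n unfolding K_def by simp
  have \<sigma>r: "\<sigma> \<omega> \<in> {0..T}" if "\<omega> \<in> space M" for \<omega> using st that unfolding stopping_time_on_def by auto
  have \<sigma>m[measurable]: "\<sigma> \<in> borel_measurable M" using stopping_meas[OF st sub] .
  have subF: "sets (F s) \<subseteq> sets M" "space (F s) = space M" if "s \<in> {0..T}" for s
    using sub that unfolding subalgebra_def by auto
  have Xm[measurable]: "X s \<in> borel_measurable M" if "s \<in> {0..T}" for s
    using measurable_from_subalg[of M "F s" "X s"] sub adp that by auto
  have Dr: "D n \<omega> \<in> K n" if "\<omega> \<in> space M" for n \<omega>
    using grid_facts(1,2)[OF T0, of "\<sigma> \<omega>" n] \<sigma>r[OF that] unfolding K_def D_def by auto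
  have ttK: "tt n k \<in> {0..T}" if "k \<in> K n" for n k
  proof -
    have "0 \<le> k" "real_of_int k \<le> 2^n" using that unfolding K_def
      by auto
    then show ?thesis unfolding tt_def using T0 by (auto simp: field_simps)
  qed
  have ttb: "\<sigma> \<omega> \<le> tt n (D n \<omega>) \<and> tt n (D n \<omega>) < \<sigma> \<omega> + T / 2^n \<and> tt n (D n \<omega>) \<le> T"
    if "\<omega> \<in> space M" for n \<omega>
    using grid_facts(3,4,5)[OF T0, of "\<sigma> \<omega>" n] \<sigma>r[OF that] unfolding tt_def D_def by auto
  have EF: "E n k \<in> sets (F (tt n k))" if "k \<in> K n" for n k
  proof -
    have Eeq: "E n k = {\<omega>\<in>space M. \<sigma> \<omega> \<le> tt n k} - {\<omega>\<in>space M. \<sigma> \<omega> \<le> tt n (k - 1)}"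
    proof -
      have "D n \<omega> = k \<longleftrightarrow> tt n (k - 1) < \<sigma> \<omega> \<and> \<sigma> \<omega> \<le> tt n k" for \<omega>
        unfolding D_def tt_def by (rule grid_eq_iff[OF T0])
      then show ?thesis unfolding E_def by (intro set_eqI) (metis (mono_tags, lifting) Diff_iff mem_Collect_eq not_le)
    qed
    have s1: "{\<omega>\<in>space M. \<sigma> \<omega> \<le> tt n k} \<in> sets (F (tt n k))"
      using st ttK[OF that] unfolding stopping_time_on_def by auto
    have s2: "{\<omega>\<in>space M. \<sigma> \<omega> \<le> tt n (k - 1)} \<in> sets (F (tt n k))"
    proof (cases "k = 0")
      case True
      have "tt n (k - 1) < 0" unfolding tt_def True using T0 by (simp add: field_simps)
      then have "\<forall>\<omega>\<in>space M. \<not> \<sigma> \<omega> \<le> tt n (k - 1)" using \<sigma>r by (meson atLeastAtMost_iff le_less_trans not_le)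
      then have "{\<omega>\<in>space M. \<sigma> \<omega> \<le> tt n (k - 1)} = {}" by blast
      then show ?thesis by (metis sets.empty_sets)
    next
      case False
      then have k1: "k - 1 \<in> K n" using that unfolding K_def by auto
      have le: "tt n (k - 1) \<le> tt n k" unfolding tt_def using T0 by (simp add: field_simps)
      have "{\<omega>\<in>space M. \<sigma> \<omega> \<le> tt n (k - 1)} \<in> sets (F (tt n (k - 1)))"
        using st ttK[OF k1] unfolding stopping_time_on_def by auto
      moreover have "sets (F (tt n (k - 1))) \<subseteq> sets (F (tt n k))"
        using mono[rule_format, of "tt n (k - 1)" "tt n k"] ttK[OF k1] ttK[OF that] le by auto
      ultimately show ?thesis by blast
    qed
    show ?thesis unfolding Eeq using s1 s2 by (rule sets.Diff)
  qed
  have EM[measurable]: "E n k \<in> sets M" if "k \<in> K n" for n k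
    using EF[OF that] subF ttK[OF that] by auto
  have sumind: "(\<Sum>k\<in>K n. indicator (E n k) \<omega> * g k) = g (D n \<omega>)" if "\<omega> \<in> space M" for n \<omega> and g :: "int \<Rightarrow> real"
  proof -
    have "(\<Sum>k\<in>K n. indicator (E n k) \<omega> * g k) = (\<Sum>k\<in>K n. if D n \<omega> = k then g k else 0)"
      by (rule sum.cong) (auto simp: E_def that)
    also have "\<dots> = g (D n \<omega>)" using Dr[OF that] finK by simp
    finally show ?thesis .
  qed
  have Yrep: "Y n \<omega> = (\<Sum>k\<in>K n. indicator (E n k) \<omega> * X (tt n k) \<omega>)" if "\<omega> \<in> space M" for n \<omega>
    using sumind[OF that, of n "\<lambda>k. X (tt n k) \<omega>"] unfolding Y_def by simp
  have Yint: "integrable M (Y n)" for n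
  proof -
    have "integrable M (\<lambda>\<omega>. \<Sum>k\<in>K n. indicator (E n k) \<omega> * X (tt n k) \<omega>)"
    proof (rule Bochner_Integration.integrable_sum)
      fix k assume "k \<in> K n"
      then show "integrable M (\<lambda>\<omega>. indicator (E n k) \<omega> * X (tt n k) \<omega>)"
        using integrable_mult_indicator[OF EM[of k n] int[rule_format, OF ttK[of k n]]] by simp
    qed
    then show ?thesis by (subst Bochner_Integration.integrable_cong[OF refl Yrep]) auto
  qed
  then have Ym[measurable]: "Y n \<in> borel_measurable M" for n by auto
  have intEk: "integrable M (\<lambda>\<omega>. indicator (E n k) \<omega> * X s \<omega>)" if "k \<in> K n" "s \<in> {0..T}" for n k s
    using integrable_mult_indicator[OF EM[OF that(1)] int[rule_format, OF that(2)]] by simp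
  have YE: "(\<integral>\<omega>. Y n \<omega> \<partial>M) = (\<integral>\<omega>. X T \<omega> \<partial>M)" for n
  proof -
    have T1: "T \<in> {0..T}" using T0 by auto
    have "(\<integral>\<omega>. Y n \<omega> \<partial>M) = (\<integral>\<omega>. (\<Sum>k\<in>K n. indicator (E n k) \<omega> * X (tt n k) \<omega>) \<partial>M)"
      by (rule Bochner_Integration.integral_cong[OF refl Yrep])
    also have "\<dots> = (\<Sum>k\<in>K n. (\<integral>\<omega>. indicator (E n k) \<omega> * X (tt n k) \<omega> \<partial>M))"
      by (rule Bochner_Integration.integral_sum) (use intEk ttK in auto)
    also have "\<dots> = (\<Sum>k\<in>K n. (\<integral>\<omega>. indicator (E n k) \<omega> * X T \<omega> \<partial>M))"
      by (rule sum.cong[OF refl]) (use mart EF ttK in auto)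
    also have "\<dots> = (\<integral>\<omega>. (\<Sum>k\<in>K n. indicator (E n k) \<omega> * X T \<omega>) \<partial>M)"
      by (rule Bochner_Integration.integral_sum[symmetric]) (use intEk T1 in auto)
    also have "\<dots> = (\<integral>\<omega>. X T \<omega> \<partial>M)"
      by (rule Bochner_Integration.integral_cong[OF refl]) (rule sumind[of _ n "\<lambda>_. X T _", simplified])
    finally show ?thesis .
  qed
  have L1: "(\<integral>\<omega>. indicator B \<omega> * \<bar>X s \<omega>\<bar> \<partial>M) \<le> (\<integral>\<omega>. indicator B \<omega> * \<bar>X T \<omega>\<bar> \<partial>M)"
    if "s \<in> {0..T}" "B \<in> sets (F s)" for s B
  proof -
    have T1: "T \<in> {0..T}" using T0 by auto
    have XF[measurable]: "X s \<in> borel_measurable (F s)" using adp that(1) by auto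
    have "{\<omega>\<in>space (F s). 0 \<le> X s \<omega>} \<in> sets (F s)" "{\<omega>\<in>space (F s). X s \<omega> < 0} \<in> sets (F s)"
      by measurable
    then have b1: "B \<inter> {\<omega>\<in>space M. 0 \<le> X s \<omega>} \<in> sets (F s)" and b2: "B \<inter> {\<omega>\<in>space M. X s \<omega> < 0} \<in> sets (F s)"
      using subF(2)[OF that(1)] that(2) by auto
    define B1 where "B1 = B \<inter> {\<omega>\<in>space M. 0 \<le> X s \<omega>}"
    define B2 where "B2 = B \<inter> {\<omega>\<in>space M. X s \<omega> < 0}"
    have b1': "B1 \<in> sets M" and b2': "B2 \<in> sets M" and bM: "B \<in> sets M"
      using b1 b2 that subF(1)[OF that(1)] unfolding B1_def B2_def by auto
    have i1: "integrable M (\<lambda>\<omega>. indicator B1 \<omega> * X u \<omega>)" if "u \<in> {0..T}" for u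
      using integrable_mult_indicator[OF b1' int[rule_format, OF that]] by simp
    have i2: "integrable M (\<lambda>\<omega>. indicator B2 \<omega> * X u \<omega>)" if "u \<in> {0..T}" for u
      using integrable_mult_indicator[OF b2' int[rule_format, OF that]] by simp
    have "(\<integral>\<omega>. indicator B \<omega> * \<bar>X s \<omega>\<bar> \<partial>M) = (\<integral>\<omega>. indicator B1 \<omega> * X s \<omega> - indicator B2 \<omega> * X s \<omega> \<partial>M)"
      by (rule Bochner_Integration.integral_cong[OF refl]) (auto simp: B1_def B2_def indicator_def)
    also have "\<dots> = (\<integral>\<omega>. indicator B1 \<omega> * X s \<omega> \<partial>M) - (\<integral>\<omega>. indicator B2 \<omega> * X s \<omega> \<partial>M)"
      by (rule Bochner_Integration.integral_diff) (use i1 i2 that(1) in auto)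
    also have "\<dots> = (\<integral>\<omega>. indicator B1 \<omega> * X T \<omega> \<partial>M) - (\<integral>\<omega>. indicator B2 \<omega> * X T \<omega> \<partial>M)"
      using mart that(1) b1 b2 unfolding B1_def B2_def by auto
    also have "\<dots> = (\<integral>\<omega>. indicator B1 \<omega> * X T \<omega> - indicator B2 \<omega> * X T \<omega> \<partial>M)"
      by (rule Bochner_Integration.integral_diff[symmetric]) (use i1 i2 T1 in auto)
    also have "\<dots> \<le> (\<integral>\<omega>. indicator B \<omega> * \<bar>X T \<omega>\<bar> \<partial>M)"
    proof (rule integral_mono)
      show "integrable M (\<lambda>\<omega>. indicator B1 \<omega> * X T \<omega> - indicator B2 \<omega> * X T \<omega>)"
        using i1 i2 T1 by auto
      show "integrable M (\<lambda>\<omega>. indicator B \<omega> * \<bar>X T \<omega>\<bar>)"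
        using integrable_mult_indicator[OF bM integrable_abs[OF int[rule_format, OF T1]]] by simp
      show "indicator B1 x * X T x - indicator B2 x * X T x \<le> indicator B x * \<bar>X T x\<bar>" for x
        by (auto simp: B1_def B2_def indicator_def)
    qed
    finally show ?thesis .
  qed
  have L2: "(\<integral>\<omega>. indicator B \<omega> * \<bar>Y n \<omega>\<bar> \<partial>M) \<le> (\<integral>\<omega>. indicator B \<omega> * \<bar>X T \<omega>\<bar> \<partial>M)"
    if "B \<in> sets M" "\<forall>k\<in>K n. B \<inter> E n k \<in> sets (F (tt n k))" for n B
  proof -
    have T1: "T \<in> {0..T}" using T0 by auto
    have BEM: "B \<inter> E n k \<in> sets M" if "k \<in> K n" for k using EM[OF that] \<open>B \<in> sets M\<close> by auto
    have ia: "integrable M (\<lambda>\<omega>. indicator (B \<inter> E n k) \<omega> * \<bar>X u \<omega>\<bar>)" if "k \<in> K n" "u \<in> {0..T}" for k u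
      using integrable_mult_indicator[OF BEM[OF that(1)] integrable_abs[OF int[rule_format, OF that(2)]]] by simp
    have rep: "indicator B \<omega> * \<bar>g (D n \<omega>)\<bar> = (\<Sum>k\<in>K n. indicator (B \<inter> E n k) \<omega> * \<bar>g k\<bar>)"
      if "\<omega> \<in> space M" for \<omega> and g :: "int \<Rightarrow> real"
      using sumind[OF that, of n "\<lambda>k. indicator B \<omega> * \<bar>g k\<bar>"]
      by (simp add: indicator_inter_arith mult.assoc mult.left_commute)
    have "(\<integral>\<omega>. indicator B \<omega> * \<bar>Y n \<omega>\<bar> \<partial>M) = (\<integral>\<omega>. (\<Sum>k\<in>K n. indicator (B \<inter> E n k) \<omega> * \<bar>X (tt n k) \<omega>\<bar>) \<partial>M)"
      by (rule Bochner_Integration.integral_cong[OF refl]) (use rep[of _ "\<lambda>k. X (tt n k) _"] in \<open>simp add: Y_def\<close>)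
    also have "\<dots> = (\<Sum>k\<in>K n. (\<integral>\<omega>. indicator (B \<inter> E n k) \<omega> * \<bar>X (tt n k) \<omega>\<bar> \<partial>M))"
      by (rule Bochner_Integration.integral_sum) (use ia ttK in auto)
    also have "\<dots> \<le> (\<Sum>k\<in>K n. (\<integral>\<omega>. indicator (B \<inter> E n k) \<omega> * \<bar>X T \<omega>\<bar> \<partial>M))"
      by (rule sum_mono) (use L1 ttK that(2) in auto)
    also have "\<dots> = (\<integral>\<omega>. (\<Sum>k\<in>K n. indicator (B \<inter> E n k) \<omega> * \<bar>X T \<omega>\<bar>) \<partial>M)"
      by (rule Bochner_Integration.integral_sum[symmetric]) (use ia T1 in auto)
    also have "\<dots> = (\<integral>\<omega>. indicator B \<omega> * \<bar>X T \<omega>\<bar> \<partial>M)"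
      by (rule Bochner_Integration.integral_cong[OF refl]) (use rep[of _ "\<lambda>_. X T _"] in simp)
    finally show ?thesis .
  qed
  have Bset: "{\<omega>\<in>space M. c < \<bar>Y n \<omega>\<bar>} \<inter> E n k \<in> sets (F (tt n k))" if "k \<in> K n" for n k c
  proof -
    have XF[measurable]: "X (tt n k) \<in> borel_measurable (F (tt n k))" using adp ttK[OF that] by auto
    have "{\<omega>\<in>space (F (tt n k)). c < \<bar>X (tt n k) \<omega>\<bar>} \<in> sets (F (tt n k))" by measurable
    then have a: "{\<omega>\<in>space M. c < \<bar>X (tt n k) \<omega>\<bar>} \<in> sets (F (tt n k))" using subF(2)[OF ttK[OF that]] by simp
    have "{\<omega>\<in>space M. c < \<bar>Y n \<omega>\<bar>} \<inter> E n k = E n k \<inter> {\<omega>\<in>space M. c < \<bar>X (tt n k) \<omega>\<bar>}"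
      unfolding E_def Y_def by auto
    then show ?thesis using a EF[OF that] by auto
  qed
  show "\<forall>n. (\<integral>\<omega>. X (T * real_of_int \<lceil>\<sigma> \<omega> * 2^n / T\<rceil> / 2^n) \<omega> \<partial>M) = (\<integral>\<omega>. X T \<omega> \<partial>M)"
    using YE unfolding Y_def tt_def D_def by simp
  show "\<forall>n. integrable M (\<lambda>\<omega>. X (T * real_of_int \<lceil>\<sigma> \<omega> * 2^n / T\<rceil> / 2^n) \<omega>)"
    using Yint unfolding Y_def tt_def D_def by simp
  show "\<forall>n c. (\<integral>\<omega>. indicator {\<omega>\<in>space M. c < \<bar>X (T * real_of_int \<lceil>\<sigma> \<omega> * 2^n / T\<rceil> / 2^n) \<omega>\<bar>} \<omega> *
                     \<bar>X (T * real_of_int \<lceil>\<sigma> \<omega> * 2^n / T\<rceil> / 2^n) \<omega>\<bar> \<partial>M)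
              \<le> (\<integral>\<omega>. indicator {\<omega>\<in>space M. c < \<bar>X (T * real_of_int \<lceil>\<sigma> \<omega> * 2^n / T\<rceil> / 2^n) \<omega>\<bar>} \<omega> * \<bar>X T \<omega>\<bar> \<partial>M)"
  proof (intro allI)
    fix n c
    have "(\<integral>\<omega>. indicator {\<omega>\<in>space M. c < \<bar>Y n \<omega>\<bar>} \<omega> * \<bar>Y n \<omega>\<bar> \<partial>M)
        \<le> (\<integral>\<omega>. indicator {\<omega>\<in>space M. c < \<bar>Y n \<omega>\<bar>} \<omega> * \<bar>X T \<omega>\<bar> \<partial>M)"
      by (rule L2) (use Bset in auto)
    then show "(\<integral>\<omega>. indicator {\<omega>\<in>space M. c < \<bar>X (T * real_of_int \<lceil>\<sigma> \<omega> * 2^n / T\<rceil> / 2^n) \<omega>\<bar>} \<omega> *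
                     \<bar>X (T * real_of_int \<lceil>\<sigma> \<omega> * 2^n / T\<rceil> / 2^n) \<omega>\<bar> \<partial>M)
              \<le> (\<integral>\<omega>. indicator {\<omega>\<in>space M. c < \<bar>X (T * real_of_int \<lceil>\<sigma> \<omega> * 2^n / T\<rceil> / 2^n) \<omega>\<bar>} \<omega> * \<bar>X T \<omega>\<bar> \<partial>M)"
      unfolding Y_def tt_def D_def by simp
  qed
qed



lemma clip_bound:
  fixes c y :: real
  assumes "0 \<le> c"
  shows "\<bar>y - max (-c) (min c y)\<bar> \<le> (if c < \<bar>y\<bar> then \<bar>y\<bar> else 0)"
    and "\<bar>max (-c) (min c y)\<bar> \<le> c"
  using assms by (auto simp: abs_if min_def max_def)

lemma ost_limit:
  fixes Y :: "nat \<Rightarrow> 'a \<Rightarrow> real"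
  assumes ps: "prob_space M"
    and Yint: "\<And>n. integrable M (Y n)"
    and Zint: "integrable M Z" and Wint: "integrable M W"
    and lim: "\<And>\<omega>. \<omega> \<in> space M \<Longrightarrow> (\<lambda>n. Y n \<omega>) \<longlonglongrightarrow> Z \<omega>"
    and const: "\<And>n. (\<integral>\<omega>. Y n \<omega> \<partial>M) = a"
    and tail: "\<And>n c. (\<integral>\<omega>. indicator {\<omega>\<in>space M. c < \<bar>Y n \<omega>\<bar>} \<omega> * \<bar>Y n \<omega>\<bar> \<partial>M)
                   \<le> (\<integral>\<omega>. indicator {\<omega>\<in>space M. c < \<bar>Y n \<omega>\<bar>} \<omega> * \<bar>W \<omega>\<bar> \<partial>M)"
  shows "(\<integral>\<omega>. Z \<omega> \<partial>M) = a"
proof -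
  interpret prob_space M by fact
  have Ym[measurable]: "Y n \<in> borel_measurable M" for n using Yint by auto
  have Zm[measurable]: "Z \<in> borel_measurable M" using Zint by auto
  have Wm[measurable]: "W \<in> borel_measurable M" using Wint by auto
  define tW where "tW L = (\<integral>\<omega>. (if real L < \<bar>W \<omega>\<bar> then \<bar>W \<omega>\<bar> else 0) \<partial>M)" for L :: nat
  define tZ where "tZ L = (\<integral>\<omega>. (if real L < \<bar>Z \<omega>\<bar> then \<bar>Z \<omega>\<bar> else 0) \<partial>M)" for L :: nat
  have tWl: "tW \<longlonglongrightarrow> 0" unfolding tW_def by (rule tail_lim[OF Wint])
  have tZl: "tZ \<longlonglongrightarrow> 0" unfolding tZ_def by (rule tail_lim[OF Zint])
  define IW where "IW = (\<integral>\<omega>. \<bar>W \<omega>\<bar> \<partial>M)"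
  have IW0: "0 \<le> IW" unfolding IW_def by simp
  have iWa: "integrable M (\<lambda>\<omega>. \<bar>W \<omega>\<bar>)" using Wint by auto
  have itW: "integrable M (\<lambda>\<omega>. if real L < \<bar>W \<omega>\<bar> then \<bar>W \<omega>\<bar> else 0)" for L :: nat
    by (rule Bochner_Integration.integrable_bound[OF iWa]) auto
  have itZ: "integrable M (\<lambda>\<omega>. if real L < \<bar>Z \<omega>\<bar> then \<bar>Z \<omega>\<bar> else 0)" for L :: nat
    by (rule Bochner_Integration.integrable_bound[of _ "\<lambda>\<omega>. \<bar>Z \<omega>\<bar>"]) (use Zint in auto)
  have main: "\<bar>(\<integral>\<omega>. Z \<omega> \<partial>M) - a\<bar> \<le> 4 * e" if e0: "0 < e" for e
  proof -
    obtain L where L: "tW L < e"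
      using tWl e0 unfolding LIMSEQ_def dist_real_def by (metis abs_less_iff add.right_neutral diff_add_cancel le_refl)
    have ev1: "eventually (\<lambda>c. tZ c < e) sequentially"
      using tZl e0 by (rule order_tendstoD)
    have ev2: "eventually (\<lambda>c::nat. real L * IW \<le> real c * e \<and> 1 \<le> c) sequentially"
    proof -
      obtain N :: nat where N: "real L * IW / e \<le> real N" using real_arch_simple by blast
      show ?thesis unfolding eventually_sequentially
      proof (intro exI[of _ "N + 1"] allI impI conjI)
        fix c :: nat assume "N + 1 \<le> c"
        then have "real L * IW / e \<le> real c" using N by linarith
        then show "real L * IW \<le> real c * e" using e0 by (simp add: field_simps)
      qed (auto)
    qed
    obtain c :: nat where c1: "tZ c < e" and c2: "real L * IW \<le> real c * e" and c3: "1 \<le> c"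
      using eventually_happens'[OF _ eventually_conj[OF ev1 ev2]] by auto
    define r where "r = real c"
    have r0: "0 < r" using c3 unfolding r_def by simp
    define \<phi> where "\<phi> y = max (-r) (min r y)" for y
    have \<phi>m[measurable]: "(\<lambda>\<omega>. \<phi> (Y n \<omega>)) \<in> borel_measurable M" for n unfolding \<phi>_def by measurable
    have \<phi>Zm[measurable]: "(\<lambda>\<omega>. \<phi> (Z \<omega>)) \<in> borel_measurable M" unfolding \<phi>_def by measurable
    have \<phi>b: "\<bar>\<phi> y\<bar> \<le> r" for y unfolding \<phi>_def using clip_bound(2) r0 by simp
    have \<phi>d: "\<bar>y - \<phi> y\<bar> \<le> (if r < \<bar>y\<bar> then \<bar>y\<bar> else 0)" for y unfolding \<phi>_def using clip_bound(1) r0 by simp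
    have i\<phi>: "integrable M (\<lambda>\<omega>. \<phi> (Y n \<omega>))" for n
      by (rule integrable_const_bound[where B=r]) (use \<phi>b in auto)
    have i\<phi>Z: "integrable M (\<lambda>\<omega>. \<phi> (Z \<omega>))"
      by (rule integrable_const_bound[where B=r]) (use \<phi>b in auto)
    have stepY: "\<bar>a - (\<integral>\<omega>. \<phi> (Y n \<omega>) \<partial>M)\<bar> \<le> 2 * e" for n
    proof -
      define B where "B = {\<omega>\<in>space M. r < \<bar>Y n \<omega>\<bar>}"
      have BM[measurable]: "B \<in> sets M" unfolding B_def by measurable
      have iBY: "integrable M (\<lambda>\<omega>. indicator B \<omega> * \<bar>Y n \<omega>\<bar>)"
        using integrable_mult_indicator[OF BM integrable_abs[OF Yint]] by simp
      have iBW: "integrable M (\<lambda>\<omega>. indicator B \<omega> * \<bar>W \<omega>\<bar>)"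
        using integrable_mult_indicator[OF BM iWa] by simp
      have iB: "integrable M (\<lambda>\<omega>. indicator B \<omega> :: real)" by (rule integrable_const_bound[where B=1]) auto
      define p :: real where "p = (\<integral>\<omega>. indicator B \<omega> \<partial>M)"
      have t: "(\<integral>\<omega>. indicator B \<omega> * \<bar>Y n \<omega>\<bar> \<partial>M) \<le> (\<integral>\<omega>. indicator B \<omega> * \<bar>W \<omega>\<bar> \<partial>M)"
        using tail[where n=n and c=r] unfolding B_def r_def .
      have "r * p = (\<integral>\<omega>. indicator B \<omega> * r \<partial>M)" unfolding p_def by simp
      also have "\<dots> \<le> (\<integral>\<omega>. indicator B \<omega> * \<bar>Y n \<omega>\<bar> \<partial>M)"
        by (rule integral_mono) (use iB iBY in \<open>auto simp: B_def indicator_def\<close>)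
      also have "\<dots> \<le> (\<integral>\<omega>. indicator B \<omega> * \<bar>W \<omega>\<bar> \<partial>M)" by (rule t)
      also have "\<dots> \<le> IW" unfolding IW_def
        by (rule integral_mono) (use iBW iWa in \<open>auto simp: indicator_def\<close>)
      finally have rp: "r * p \<le> IW" .
      have "real L * p \<le> e"
      proof -
        have p0: "0 \<le> p" unfolding p_def by simp
        have "real L * p * r \<le> real L * IW" using mult_left_mono[OF rp, of "real L"] by (simp add: algebra_simps)
        also have "\<dots> \<le> r * e" using c2 unfolding r_def .
        finally show ?thesis using r0 by (simp add: mult.commute)
      qed
      have "(\<integral>\<omega>. indicator B \<omega> * \<bar>W \<omega>\<bar> \<partial>M)
            \<le> (\<integral>\<omega>. (if real L < \<bar>W \<omega>\<bar> then \<bar>W \<omega>\<bar> else 0) + real L * indicator B \<omega> \<partial>M)"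
        by (rule integral_mono) (use iBW itW iB in \<open>auto simp: indicator_def\<close>)
      also have "\<dots> = tW L + real L * p" unfolding tW_def p_def
        by (subst Bochner_Integration.integral_add) (use itW iB in auto)
      finally have hW: "(\<integral>\<omega>. indicator B \<omega> * \<bar>W \<omega>\<bar> \<partial>M) \<le> tW L + real L * p" .
      have "\<bar>a - (\<integral>\<omega>. \<phi> (Y n \<omega>) \<partial>M)\<bar> = \<bar>(\<integral>\<omega>. Y n \<omega> - \<phi> (Y n \<omega>) \<partial>M)\<bar>"
        using const[of n] by (subst Bochner_Integration.integral_diff) (use Yint i\<phi> in auto)
      also have "\<dots> \<le> (\<integral>\<omega>. \<bar>Y n \<omega> - \<phi> (Y n \<omega>)\<bar> \<partial>M)"
        by (rule integral_abs_bound)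
      also have "\<dots> \<le> (\<integral>\<omega>. indicator B \<omega> * \<bar>Y n \<omega>\<bar> \<partial>M)"
      proof (rule integral_mono)
        fix x assume "x \<in> space M"
        then show "\<bar>Y n x - \<phi> (Y n x)\<bar> \<le> indicator B x * \<bar>Y n x\<bar>"
          using \<phi>d[of "Y n x"] unfolding B_def indicator_def by (auto split: if_splits)
      qed (use Yint i\<phi> iBY in auto)
      finally show ?thesis using t hW L \<open>real L * p \<le> e\<close> by linarith
    qed
    have stepZ: "\<bar>(\<integral>\<omega>. Z \<omega> \<partial>M) - (\<integral>\<omega>. \<phi> (Z \<omega>) \<partial>M)\<bar> \<le> e"
    proof -
      have "\<bar>(\<integral>\<omega>. Z \<omega> \<partial>M) - (\<integral>\<omega>. \<phi> (Z \<omega>) \<partial>M)\<bar> = \<bar>(\<integral>\<omega>. Z \<omega> - \<phi> (Z \<omega>) \<partial>M)\<bar>"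
        by (subst Bochner_Integration.integral_diff) (use Zint i\<phi>Z in auto)
      also have "\<dots> \<le> (\<integral>\<omega>. \<bar>Z \<omega> - \<phi> (Z \<omega>)\<bar> \<partial>M)"
        by (rule integral_abs_bound)
      also have "\<dots> \<le> tZ c" unfolding tZ_def
        by (rule integral_mono) (use Zint i\<phi>Z itZ \<phi>d in \<open>auto simp: r_def\<close>)
      finally show ?thesis using c1 by linarith
    qed
    have conv: "(\<lambda>n. \<integral>\<omega>. \<phi> (Y n \<omega>) \<partial>M) \<longlonglongrightarrow> (\<integral>\<omega>. \<phi> (Z \<omega>) \<partial>M)"
    proof (rule integral_dominated_convergence[where w="\<lambda>_. r"])
      show "AE x in M. (\<lambda>i. \<phi> (Y i x)) \<longlonglongrightarrow> \<phi> (Z x)"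
      proof (rule AE_I2)
        fix x assume "x \<in> space M"
        then show "(\<lambda>i. \<phi> (Y i x)) \<longlonglongrightarrow> \<phi> (Z x)" unfolding \<phi>_def
          by (intro tendsto_intros lim)
      qed
    qed (use \<phi>b in auto)
    have "\<bar>a - (\<integral>\<omega>. \<phi> (Z \<omega>) \<partial>M)\<bar> \<le> 2 * e"
    proof -
      have "(\<lambda>n. \<bar>a - (\<integral>\<omega>. \<phi> (Y n \<omega>) \<partial>M)\<bar>) \<longlonglongrightarrow> \<bar>a - (\<integral>\<omega>. \<phi> (Z \<omega>) \<partial>M)\<bar>"
        by (intro tendsto_intros conv)
      then show ?thesis by (rule LIMSEQ_le_const2) (use stepY in auto)
    qed
    then show ?thesis using stepZ by linarith
  qed
  show ?thesis
  proof (rule ccontr)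
    assume "(\<integral>\<omega>. Z \<omega> \<partial>M) \<noteq> a"
    then have d: "0 < \<bar>(\<integral>\<omega>. Z \<omega> \<partial>M) - a\<bar>" by simp
    have "\<bar>(\<integral>\<omega>. Z \<omega> \<partial>M) - a\<bar> \<le> 4 * (\<bar>(\<integral>\<omega>. Z \<omega> \<partial>M) - a\<bar> / 8)"
      by (rule main) (use d in simp)
    then show False using d by simp
  qed
qed



lemma ost:
  fixes X :: "real \<Rightarrow> 'a \<Rightarrow> real"
  assumes ps: "prob_space M" and T0: "0 \<le> T"
    and sub: "\<forall>t\<in>{0..T}. subalgebra M (F t)"
    and mono: "\<forall>s t. 0 \<le> s \<and> s \<le> t \<and> t \<le> T \<longrightarrow> sets (F s) \<subseteq> sets (F t)"
    and adp: "\<forall>t\<in>{0..T}. X t \<in> borel_measurable (F t)"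
    and int: "\<forall>t\<in>{0..T}. integrable M (X t)"
    and mart: "\<forall>s\<in>{0..T}. \<forall>C\<in>sets (F s). (\<integral>\<omega>. indicator C \<omega> * X s \<omega> \<partial>M) = (\<integral>\<omega>. indicator C \<omega> * X T \<omega> \<partial>M)"
    and rc: "\<forall>\<omega>\<in>space M. \<forall>t\<in>{0..<T}. continuous (at t within {t..T}) (\<lambda>s. X s \<omega>)"
    and st: "stopping_time_on M F T \<sigma>"
    and int\<sigma>: "integrable M (\<lambda>\<omega>. X (\<sigma> \<omega>) \<omega>)"
  shows "(\<integral>\<omega>. X (\<sigma> \<omega>) \<omega> \<partial>M) = (\<integral>\<omega>. X T \<omega> \<partial>M)"
proof (cases "T = 0")
  case True
  have "\<sigma> \<omega> = T" if "\<omega> \<in> space M" for \<omega> using st that True unfolding stopping_time_on_def by auto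
  then show ?thesis by (intro Bochner_Integration.integral_cong) auto
next
  case False
  then have Tp: "0 < T" using T0 by simp
  note core = ost_core[OF ps Tp sub mono adp int mart st]
  have T1: "T \<in> {0..T}" using T0 by auto
  show ?thesis
  proof (rule ost_limit[OF ps _ int\<sigma> int[rule_format, OF T1]])
    show "\<And>n. integrable M (\<lambda>\<omega>. X (T * real_of_int \<lceil>\<sigma> \<omega> * 2 ^ n / T\<rceil> / 2 ^ n) \<omega>)"
      using core(3) by auto
    show "\<And>n. (\<integral>\<omega>. X (T * real_of_int \<lceil>\<sigma> \<omega> * 2 ^ n / T\<rceil> / 2 ^ n) \<omega> \<partial>M) = (\<integral>\<omega>. X T \<omega> \<partial>M)"
      using core(1) by auto
    show "\<And>n c. (\<integral>\<omega>. indicator {\<omega>\<in>space M. c < \<bar>X (T * real_of_int \<lceil>\<sigma> \<omega> * 2 ^ n / T\<rceil> / 2 ^ n) \<omega>\<bar>} \<omega> *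
                     \<bar>X (T * real_of_int \<lceil>\<sigma> \<omega> * 2^n / T\<rceil> / 2^n) \<omega>\<bar> \<partial>M)
              \<le> (\<integral>\<omega>. indicator {\<omega>\<in>space M. c < \<bar>X (T * real_of_int \<lceil>\<sigma> \<omega> * 2^n / T\<rceil> / 2^n) \<omega>\<bar>} \<omega> * \<bar>X T \<omega>\<bar> \<partial>M)"
      using core(2) by auto
    fix \<omega> assume \<omega>: "\<omega> \<in> space M"
    define x where "x n = T * real_of_int \<lceil>\<sigma> \<omega> * 2 ^ n / T\<rceil> / 2 ^ n" for n :: nat
    have \<sigma>r: "0 \<le> \<sigma> \<omega>" "\<sigma> \<omega> \<le> T" using st \<omega> unfolding stopping_time_on_def by auto
    have xb: "\<sigma> \<omega> \<le> x n" "x n < \<sigma> \<omega> + T / 2^n" "x n \<le> T" for n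
      using grid_facts(3,4,5)[OF Tp \<sigma>r, of n] unfolding x_def by auto
    show "(\<lambda>n. X (T * real_of_int \<lceil>\<sigma> \<omega> * 2 ^ n / T\<rceil> / 2 ^ n) \<omega>) \<longlonglongrightarrow> X (\<sigma> \<omega>) \<omega>"
      unfolding x_def[symmetric]
    proof (cases "\<sigma> \<omega> = T")
      case True
      then have "x n = T" for n using xb[of n] by auto
      then show "(\<lambda>n. X (x n) \<omega>) \<longlonglongrightarrow> X (\<sigma> \<omega>) \<omega>" using True by simp
    next
      case False
      then have lt: "\<sigma> \<omega> \<in> {0..<T}" using \<sigma>r by auto
      have xl: "x \<longlonglongrightarrow> \<sigma> \<omega>"
      proof (rule tendsto_sandwich[where f="\<lambda>_. \<sigma> \<omega>" and h="\<lambda>n. \<sigma> \<omega> + T / 2^n"])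
        show "(\<lambda>n. \<sigma> \<omega> + T / 2 ^ n) \<longlonglongrightarrow> \<sigma> \<omega>"
          using tendsto_add[OF tendsto_const LIMSEQ_divide_realpow_zero[of 2 T]] by simp
      qed (use xb in \<open>auto intro: always_eventually less_imp_le\<close>)
      show "(\<lambda>n. X (x n) \<omega>) \<longlonglongrightarrow> X (\<sigma> \<omega>) \<omega>"
        by (rule continuous_within_tendsto_compose'[OF rc[rule_format, OF \<omega> lt] _ xl]) (use xb in auto)
    qed
  qed
qed



lemma stopped_ce:
  fixes X :: "real \<Rightarrow> 'a \<Rightarrow> real"
  assumes ps: "prob_space M" and T0: "0 \<le> T"
    and sub: "\<forall>t\<in>{0..T}. subalgebra M (F t)"
    and mono: "\<forall>s t. 0 \<le> s \<and> s \<le> t \<and> t \<le> T \<longrightarrow> sets (F s) \<subseteq> sets (F t)"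
    and adp: "\<forall>t\<in>{0..T}. X t \<in> borel_measurable (F t)"
    and int: "\<forall>t\<in>{0..T}. integrable M (X t)"
    and mart: "\<forall>s\<in>{0..T}. \<forall>C\<in>sets (F s). (\<integral>\<omega>. indicator C \<omega> * X s \<omega> \<partial>M) = (\<integral>\<omega>. indicator C \<omega> * X T \<omega> \<partial>M)"
    and rc: "\<forall>\<omega>\<in>space M. \<forall>t\<in>{0..<T}. continuous (at t within {t..T}) (\<lambda>s. X s \<omega>)"
    and st: "stopping_time_on M F T \<theta>"
    and intst: "\<forall>t\<in>{0..T}. integrable M (\<lambda>\<omega>. X (min t (\<theta> \<omega>)) \<omega>)"
    and t: "t \<in> {0..T}"
  shows "AE \<omega> in M. real_cond_exp M (F t) (\<lambda>\<omega>. X (min T (\<theta> \<omega>)) \<omega> - X (min t (\<theta> \<omega>)) \<omega>) \<omega> = 0"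
proof -
  interpret prob_space M by fact
  interpret sfs: sigma_finite_subalgebra M "F t" using sfs[OF ps] sub t by auto
  have T1: "T \<in> {0..T}" using T0 by auto
  define f where "f \<omega> = X (min T (\<theta> \<omega>)) \<omega> - X (min t (\<theta> \<omega>)) \<omega>" for \<omega>
  have fint: "integrable M f" unfolding f_def using intst t T1 by auto
  have \<theta>r: "0 \<le> \<theta> \<omega> \<and> \<theta> \<omega> \<le> T" if "\<omega> \<in> space M" for \<omega> using st that unfolding stopping_time_on_def by auto
  have subF: "sets (F s) \<subseteq> sets M" "space (F s) = space M" if "s \<in> {0..T}" for s
    using sub that unfolding subalgebra_def by auto
  have key: "(\<integral>\<omega>. indicator A \<omega> * f \<omega> \<partial>M) = 0" if A: "A \<in> sets (F t)" for A
  proof -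
    have AM: "A \<in> sets M" using A subF t by auto
    have Asp: "A \<subseteq> space M" using sets.sets_into_space[OF AM] .
    define \<rho> where "\<rho> \<omega> = (if \<omega> \<in> A then max (\<theta> \<omega>) t else T)" for \<omega>
    have st\<rho>: "stopping_time_on M F T \<rho>"
      unfolding stopping_time_on_def
    proof (intro conjI ballI)
      fix \<omega> assume "\<omega> \<in> space M" then show "\<rho> \<omega> \<in> {0..T}" using \<theta>r t T0 unfolding \<rho>_def by auto
    next
      fix s assume s: "s \<in> {0..T}"
      show "{\<omega> \<in> space M. \<rho> \<omega> \<le> s} \<in> sets (F s)"
      proof (cases "s < t")
        case True
        have "{\<omega> \<in> space M. \<rho> \<omega> \<le> s} = {}" using True t unfolding \<rho>_def by auto
        then show ?thesis by (metis sets.empty_sets)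
      next
        case False
        have AF: "A \<in> sets (F s)" using mono[rule_format, of t s] A t s False by auto
        have \<theta>F: "{\<omega> \<in> space M. \<theta> \<omega> \<le> s} \<in> sets (F s)" using st s unfolding stopping_time_on_def by auto
        have cF: "(space M - A) \<in> sets (F s)" using AF subF(2)[OF s] by (metis sets.compl_sets)
        have eq: "{\<omega> \<in> space M. \<rho> \<omega> \<le> s} = (A \<inter> {\<omega> \<in> space M. \<theta> \<omega> \<le> s}) \<union> (if T \<le> s then space M - A else {})"
          using False Asp unfolding \<rho>_def by auto
        show ?thesis unfolding eq using AF \<theta>F cF by auto
      qed
    qed
    have rep: "X (\<rho> \<omega>) \<omega> = indicator A \<omega> * (f \<omega> + X t \<omega>) + (1 - indicator A \<omega>) * X T \<omega>" if "\<omega> \<in> space M" for \<omega>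
      using \<theta>r[OF that] t unfolding \<rho>_def f_def indicator_def by (auto simp: max_def min_def)
    have i1: "integrable M (\<lambda>\<omega>. indicator A \<omega> * (f \<omega> + X t \<omega>))"
      using integrable_mult_indicator[OF AM Bochner_Integration.integrable_add[OF fint int[rule_format, OF t]]] by simp
    have i2: "integrable M (\<lambda>\<omega>. (1 - indicator A \<omega>) * X T \<omega>)"
    proof -
      have "integrable M (\<lambda>\<omega>. X T \<omega> - indicator A \<omega> * X T \<omega>)"
        using integrable_mult_indicator[OF AM int[rule_format, OF T1]] int[rule_format, OF T1] by simp
      then show ?thesis by (simp add: algebra_simps)
    qed
    have i3: "integrable M (\<lambda>\<omega>. indicator A \<omega> * f \<omega>)" using integrable_mult_indicator[OF AM fint] by simp
    have i4: "integrable M (\<lambda>\<omega>. indicator A \<omega> * X s \<omega>)" if "s \<in> {0..T}" for s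
      using integrable_mult_indicator[OF AM int[rule_format, OF that]] by simp
    have intr: "integrable M (\<lambda>\<omega>. X (\<rho> \<omega>) \<omega>)"
      by (subst Bochner_Integration.integrable_cong[OF refl rep]) (use i1 i2 in auto)
    have "(\<integral>\<omega>. X (\<rho> \<omega>) \<omega> \<partial>M) = (\<integral>\<omega>. X T \<omega> \<partial>M)"
      by (rule ost[OF ps T0 sub mono adp int mart rc st\<rho> intr])
    moreover have "(\<integral>\<omega>. X (\<rho> \<omega>) \<omega> \<partial>M) = (\<integral>\<omega>. indicator A \<omega> * f \<omega> \<partial>M) + (\<integral>\<omega>. indicator A \<omega> * X t \<omega> \<partial>M)
        + ((\<integral>\<omega>. X T \<omega> \<partial>M) - (\<integral>\<omega>. indicator A \<omega> * X T \<omega> \<partial>M))"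
    proof -
      have "(\<integral>\<omega>. X (\<rho> \<omega>) \<omega> \<partial>M) = (\<integral>\<omega>. indicator A \<omega> * f \<omega> + indicator A \<omega> * X t \<omega> + (X T \<omega> - indicator A \<omega> * X T \<omega>) \<partial>M)"
        by (rule Bochner_Integration.integral_cong[OF refl]) (simp add: rep algebra_simps)
      also have "\<dots> = (\<integral>\<omega>. indicator A \<omega> * f \<omega> \<partial>M) + (\<integral>\<omega>. indicator A \<omega> * X t \<omega> \<partial>M)
        + ((\<integral>\<omega>. X T \<omega> \<partial>M) - (\<integral>\<omega>. indicator A \<omega> * X T \<omega> \<partial>M))"
        using i3 i4[OF t] i4[OF T1] int[rule_format, OF T1] by simp
      finally show ?thesis .
    qed
    moreover have "(\<integral>\<omega>. indicator A \<omega> * X t \<omega> \<partial>M) = (\<integral>\<omega>. indicator A \<omega> * X T \<omega> \<partial>M)"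
      using mart t A by auto
    ultimately show ?thesis by linarith
  qed
  have "AE \<omega> in M. real_cond_exp M (F t) f \<omega> = (\<lambda>_. 0) \<omega>"
  proof (rule sfs.real_cond_exp_charact)
    fix A assume "A \<in> sets (F t)"
    then show "(\<integral>x\<in>A. f x \<partial>M) = (\<integral>x\<in>A. 0 \<partial>M)"
      using key unfolding set_lebesgue_integral_def by simp
  qed (use fint in auto)
  then show ?thesis unfolding f_def by simp
qed



lemma ce_ind:
  assumes ps: "prob_space M" and sub: "subalgebra M G" and fi: "integrable M f"
    and C: "C \<in> sets G" and gm: "g \<in> borel_measurable M"
    and ae: "AE x in M. g x = real_cond_exp M G f x"
  shows "(\<integral>x. indicator C x * g x \<partial>M) = (\<integral>x. indicator C x * f x \<partial>M)"
proof -
  interpret sfs: sigma_finite_subalgebra M G using sfs[OF ps sub] .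
  have CM: "C \<in> sets M" using C sub unfolding subalgebra_def by auto
  have [measurable]: "g \<in> borel_measurable M" "C \<in> sets M" "real_cond_exp M G f \<in> borel_measurable M"
    using gm CM borel_measurable_cond_exp2 by auto
  have ae2: "AE x in M. indicator C x * g x = indicator C x * real_cond_exp M G f x"
    using ae by eventually_elim simp
  have "(\<integral>x. indicator C x * g x \<partial>M) = (\<integral>x. indicator C x * real_cond_exp M G f x \<partial>M)"
    by (rule integral_cong_AE[OF _ _ ae2]) measurable
  also have "\<dots> = (\<integral>x. indicator C x * f x \<partial>M)"
    by (rule sfs.real_cond_exp_intg(2)) (use integrable_mult_indicator[OF CM fi] C fi in auto)
  finally show ?thesis .
qed

lemma mart_ind:
  assumes ps: "prob_space M" and sub: "\<forall>t\<in>{0..T}. subalgebra M (F t)"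
    and m: "martingale_on M F T X"
  shows "\<forall>s\<in>{0..T}. \<forall>C\<in>sets (F s). (\<integral>\<omega>. indicator C \<omega> * X s \<omega> \<partial>M) = (\<integral>\<omega>. indicator C \<omega> * X T \<omega> \<partial>M)"
proof (intro ballI)
  fix s C assume s: "s \<in> {0..T}" and C: "C \<in> sets (F s)"
  have T1: "T \<in> {0..T}" using s by auto
  have ad: "X s \<in> borel_measurable (F s)" and iT: "integrable M (X T)"
    and ae: "AE \<omega> in M. real_cond_exp M (F s) (X T) \<omega> = X s \<omega>"
    using m s T1 unfolding martingale_on_def adapted_def integrable_process_def by auto
  have "X s \<in> borel_measurable M" using measurable_from_subalg[OF _ ad] sub s by auto
  moreover have "AE x in M. X s x = real_cond_exp M (F s) (X T) x"
    using ae by eventually_elim simp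
  moreover have "subalgebra M (F s)" using sub s by auto
  ultimately show "(\<integral>\<omega>. indicator C \<omega> * X s \<omega> \<partial>M) = (\<integral>\<omega>. indicator C \<omega> * X T \<omega> \<partial>M)"
    using ce_ind[OF ps _ iT C] by blast
qed

lemma ind1:
  fixes f :: "'a \<Rightarrow> real"
  assumes "integrable M f" "Measurable.pred M P"
  shows "integrable M (\<lambda>\<omega>. (if P \<omega> then 1 else 0) * f \<omega>)"
proof (rule Bochner_Integration.integrable_bound[OF assms(1)])
  have [measurable]: "Measurable.pred M P" "f \<in> borel_measurable M" using assms by auto
  show "(\<lambda>\<omega>. (if P \<omega> then 1 else 0) * f \<omega>) \<in> borel_measurable M" by measurable
  show "AE x in M. norm ((if P x then 1 else 0) * f x) \<le> norm (f x)" by auto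
qed

lemma ind2:
  fixes f :: "'a \<Rightarrow> real"
  assumes "integrable M f" "Measurable.pred M P"
  shows "integrable M (\<lambda>\<omega>. (1 - (if P \<omega> then 1 else 0)) * f \<omega>)"
proof (rule Bochner_Integration.integrable_bound[OF assms(1)])
  have [measurable]: "Measurable.pred M P" "f \<in> borel_measurable M" using assms by auto
  show "(\<lambda>\<omega>. (1 - (if P \<omega> then 1 else 0)) * f \<omega>) \<in> borel_measurable M" by measurable
  show "AE x in M. norm ((1 - (if P x then 1 else 0)) * f x) \<le> norm (f x)" by auto
qed



theorem lemma3p1:
  fixes M :: "'a measure" and F :: "real \<Rightarrow> 'a measure" and T :: real
    and CQ Q CP P K q p h :: "real \<Rightarrow> 'a \<Rightarrow> real"
    and \<tau>s \<theta> :: "'a \<Rightarrow> real"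
  assumes "prob_space M" and "0 \<le> T"
    and "filtration_usual M F T"
    and "cash_flow M F T CQ"
    and "adapted F T Q" and "cadlag M T Q" and "integrable_process M T Q"
    and "is_callable_value M F T CQ Q"
    and "is_drift M F T (\<lambda>t \<omega>. CQ t \<omega> + Q t \<omega>) K"
    and "cash_flow M F T CP"
    and "adapted F T P" and "cadlag M T P" and "integrable_process M T P"
    and "is_fair_value M F T CP P"
    and "semimartingale_on M F T q" and "semimartingale_on M F T p"
    and "\<forall>\<omega>\<in>space M. q T \<omega> = 0"
    and "stopping_time_on M F T \<tau>s" and "stopping_time_on M F T \<theta>"
    and "martingale_on M F T h" and "cadlag M T h"
    and "\<forall>t\<in>{0..T}. \<forall>\<omega>\<in>space M. h t \<omega> = stopped \<theta> h t \<omega>"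
    \<comment> \<open>integrability needed for the conditional expectations to exist\<close>
    and "\<forall>X\<in>{CQ, Q, CP, P, K, q, p, h}. integrable_process M T X \<and> integrable_process M T (stopped \<theta> X)"
    and "\<forall>\<tau>. stopping_time_on M F T \<tau> \<longrightarrow> integrable M (\<lambda>\<omega>. CQ (\<tau> \<omega>) \<omega>)"
  shows "\<forall>t\<in>{0..T}. AE \<omega> in M.
           HVA M F T \<tau>s \<theta> CQ Q CP P q p h t \<omega> =
           va M F T (\<lambda>t \<omega>. from0 (stopped \<theta> (\<lambda>t \<omega>. CQ t \<omega> + Q t \<omega>)) t \<omega>
                          - from0 (stopped \<theta> (\<lambda>t \<omega>. CP t \<omega> + P t \<omega>)) t \<omega>
                          - pnl \<tau>s \<theta> CQ Q CP P q p h t \<omega>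
                          + stopped \<theta> K t \<omega>) t \<omega>"
proof -
  note ps = assms(1) and T0 = assms(2)
  interpret prob_space M by fact
  have sub: "\<forall>t\<in>{0..T}. subalgebra M (F t)"
    and mono: "\<forall>s t. 0 \<le> s \<and> s \<le> t \<and> t \<le> T \<longrightarrow> sets (F s) \<subseteq> sets (F t)"
    using assms(3) unfolding filtration_usual_def by auto
  have T1: "T \<in> {0..T}" using T0 by auto
  have \<theta>m[measurable]: "\<theta> \<in> borel_measurable M" by (rule stopping_meas[OF assms(19) sub])
  have \<tau>m[measurable]: "\<tau>s \<in> borel_measurable M" by (rule stopping_meas[OF assms(18) sub])
  have \<theta>r: "0 \<le> \<theta> \<omega> \<and> \<theta> \<omega> \<le> T" if "\<omega> \<in> space M" for \<omega>
    using assms(19) that unfolding stopping_time_on_def by auto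
  have ips: "integrable M (X s) \<and> integrable M (\<lambda>\<omega>. X (min s (\<theta> \<omega>)) \<omega>)"
    if "X \<in> {CQ, Q, CP, P, K, q, p, h}" "s \<in> {0..T}" for X s
    using assms(23) that unfolding integrable_process_def stopped_def by blast
  have cQ: "adapted F T CQ" "cadlag M T CQ" using assms(4) unfolding cash_flow_def by auto
  have cP: "adapted F T CP" "cadlag M T CP" using assms(10) unfolding cash_flow_def by auto
  have dK: "adapted F T K" "cadlag M T K" "martingale_on M F T (\<lambda>t \<omega>. CQ t \<omega> + Q t \<omega> + K t \<omega>)"
    using assms(9) unfolding is_drift_def by auto
  define Y where "Y t \<omega> = CQ t \<omega> + Q t \<omega> + K t \<omega>" for t \<omega>
  have ceY: "AE \<omega> in M. real_cond_exp M (F t) (\<lambda>\<omega>. Y (min T (\<theta> \<omega>)) \<omega> - Y (min t (\<theta> \<omega>)) \<omega>) \<omega> = 0"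
    if t: "t \<in> {0..T}" for t
  proof (rule stopped_ce[OF ps T0 sub mono _ _ _ _ assms(19) _ t])
    show "\<forall>t\<in>{0..T}. Y t \<in> borel_measurable (F t)"
      using cQ(1) assms(5) dK(1) unfolding adapted_def Y_def by (auto intro!: borel_measurable_add)
    show "\<forall>t\<in>{0..T}. integrable M (Y t)"
      using ips unfolding Y_def by auto
    show "\<forall>s\<in>{0..T}. \<forall>C\<in>sets (F s). (\<integral>\<omega>. indicator C \<omega> * Y s \<omega> \<partial>M) = (\<integral>\<omega>. indicator C \<omega> * Y T \<omega> \<partial>M)"
      using mart_ind[OF ps sub dK(3)] unfolding Y_def by simp
    show "\<forall>\<omega>\<in>space M. \<forall>t\<in>{0..<T}. continuous (at t within {t..T}) (\<lambda>s. Y s \<omega>)"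
      using cQ(2) assms(6) dK(2) unfolding cadlag_def Y_def by (auto intro!: continuous_add)
    show "\<forall>t\<in>{0..T}. integrable M (\<lambda>\<omega>. Y (min t (\<theta> \<omega>)) \<omega>)"
      using ips unfolding Y_def by auto
  qed
  define W where "W t \<omega> = CP t \<omega> + P t \<omega>" for t \<omega>
  have ceW: "AE \<omega> in M. real_cond_exp M (F t) (\<lambda>\<omega>. W (min T (\<theta> \<omega>)) \<omega> - W (min t (\<theta> \<omega>)) \<omega>) \<omega> = 0"
    if t: "t \<in> {0..T}" for t
  proof (rule stopped_ce[OF ps T0 sub mono _ _ _ _ assms(19) _ t])
    show "\<forall>t\<in>{0..T}. W t \<in> borel_measurable (F t)"
      using cP(1) assms(11) unfolding adapted_def W_def by (auto intro!: borel_measurable_add)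
    show "\<forall>t\<in>{0..T}. integrable M (W t)"
      using ips unfolding W_def by auto
    show "\<forall>s\<in>{0..T}. \<forall>C\<in>sets (F s). (\<integral>\<omega>. indicator C \<omega> * W s \<omega> \<partial>M) = (\<integral>\<omega>. indicator C \<omega> * W T \<omega> \<partial>M)"
    proof (intro ballI)
      fix s C assume s: "s \<in> {0..T}" and C: "C \<in> sets (F s)"
      have hP: "(\<integral>\<omega>. indicator C \<omega> * P u \<omega> \<partial>M) = (\<integral>\<omega>. indicator C \<omega> * (CP T \<omega> - CP u \<omega>) \<partial>M)"
        if u: "u \<in> {0..T}" and C: "C \<in> sets (F u)" for u C
      proof (rule ce_ind[OF ps _ _ C])
        show "subalgebra M (F u)" using sub u by auto
        show "integrable M (\<lambda>\<omega>. CP T \<omega> - CP u \<omega>)" using ips u T1 by auto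
        show "P u \<in> borel_measurable M"
          using measurable_from_subalg[of M "F u" "P u"] sub u assms(11) unfolding adapted_def by auto
        show "AE x in M. P u x = real_cond_exp M (F u) (\<lambda>\<omega>. CP T \<omega> - CP u \<omega>) x"
          using assms(14) u unfolding is_fair_value_def va_def by auto
      qed
      have CT: "C \<in> sets (F T)" using mono[rule_format, of s T] s C by auto
      have CM: "C \<in> sets M" using sub s C unfolding subalgebra_def by auto
      have ii: "integrable M (\<lambda>\<omega>. indicator C \<omega> * X u \<omega>)" if "X \<in> {CQ, Q, CP, P, K, q, p, h}" "u \<in> {0..T}" for X u
        using integrable_mult_indicator[OF CM conjunct1[OF ips[OF that]]] by simp
      have "(\<integral>\<omega>. indicator C \<omega> * W s \<omega> \<partial>M) = (\<integral>\<omega>. indicator C \<omega> * CP s \<omega> \<partial>M) + (\<integral>\<omega>. indicator C \<omega> * P s \<omega> \<partial>M)"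
        unfolding W_def distrib_left by (rule Bochner_Integration.integral_add) (use ii s in auto)
      also have "\<dots> = (\<integral>\<omega>. indicator C \<omega> * CP s \<omega> \<partial>M) + (\<integral>\<omega>. indicator C \<omega> * CP T \<omega> - indicator C \<omega> * CP s \<omega> \<partial>M)"
        using hP[OF s C] by (simp add: right_diff_distrib)
      also have "\<dots> = (\<integral>\<omega>. indicator C \<omega> * CP T \<omega> \<partial>M)"
        by (subst Bochner_Integration.integral_diff) (use ii s T1 in auto)
      also have "\<dots> = (\<integral>\<omega>. indicator C \<omega> * CP T \<omega> \<partial>M) + (\<integral>\<omega>. indicator C \<omega> * P T \<omega> \<partial>M)"
        using hP[OF T1 CT] by simp
      also have "\<dots> = (\<integral>\<omega>. indicator C \<omega> * W T \<omega> \<partial>M)"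
        unfolding W_def distrib_left by (rule Bochner_Integration.integral_add[symmetric]) (use ii T1 in auto)
      finally show "(\<integral>\<omega>. indicator C \<omega> * W s \<omega> \<partial>M) = (\<integral>\<omega>. indicator C \<omega> * W T \<omega> \<partial>M)" .
    qed
    show "\<forall>\<omega>\<in>space M. \<forall>t\<in>{0..<T}. continuous (at t within {t..T}) (\<lambda>s. W s \<omega>)"
      using cP(2) assms(12) unfolding cadlag_def W_def by (auto intro!: continuous_add)
    show "\<forall>t\<in>{0..T}. integrable M (\<lambda>\<omega>. W (min t (\<theta> \<omega>)) \<omega>)"
      using ips unfolding W_def by auto
  qed
  have ipnl: "integrable M (pnl \<tau>s \<theta> CQ Q CP P q p h s)" if s: "s \<in> {0..T}" for s
  proof -
    have iT: "integrable M (\<lambda>\<omega>. X (\<theta> \<omega>) \<omega>)" if "X \<in> {CQ, Q, CP, P, K, q, p, h}" for X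
    proof -
      have "integrable M (\<lambda>\<omega>. X (min T (\<theta> \<omega>)) \<omega>)" using ips[OF that T1] by simp
      moreover have eq: "\<omega> \<in> space M \<Longrightarrow> X (\<theta> \<omega>) \<omega> = X (min T (\<theta> \<omega>)) \<omega>" for \<omega>
        using \<theta>r[of \<omega>] by (metis min.absorb2)
      ultimately show ?thesis by (subst Bochner_Integration.integrable_cong[OF refl eq]) auto
    qed
    have S0: "(0::real) \<in> {0..T}" using T0 by auto
    note i1 = ips[OF _ s, THEN conjunct2] and i0 = ips[OF _ S0, THEN conjunct2] and ih = ips[OF _ s, THEN conjunct1]
    have hs: "integrable M (h s)" using ih by simp
    have pr: "Measurable.pred M (\<lambda>\<omega>. min u (\<theta> \<omega>) < \<tau>s \<omega>)" for u by measurable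
    have p\<theta>: "Measurable.pred M (\<lambda>\<omega>. u < \<theta> \<omega>)" for u by measurable
    have p\<tau>: "Measurable.pred M (\<lambda>\<omega>. \<theta> \<omega> < \<tau>s \<omega>)" by measurable
    show ?thesis
      unfolding pnl_def Let_def from0_def stopped_def ind_before_def
      apply (intro Bochner_Integration.integrable_diff Bochner_Integration.integrable_add ind1 ind2)
      by (auto intro: i1 i0 iT hs pr p\<theta> p\<tau>)
  qed
  define Z where "Z = (\<lambda>t \<omega>. from0 (stopped \<theta> (\<lambda>t \<omega>. CQ t \<omega> + Q t \<omega>)) t \<omega>
                          - from0 (stopped \<theta> (\<lambda>t \<omega>. CP t \<omega> + P t \<omega>)) t \<omega>
                          - pnl \<tau>s \<theta> CQ Q CP P q p h t \<omega>
                          + stopped \<theta> K t \<omega>)"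
  show ?thesis unfolding Z_def[symmetric]
  proof (intro ballI)
    fix t assume t: "t \<in> {0..T}"
    interpret sft: sigma_finite_subalgebra M "F t" using sfs[OF ps] sub t by auto
    define a where "a \<omega> = Y (min T (\<theta> \<omega>)) \<omega> - Y (min t (\<theta> \<omega>)) \<omega>" for \<omega>
    define b where "b \<omega> = W (min T (\<theta> \<omega>)) \<omega> - W (min t (\<theta> \<omega>)) \<omega>" for \<omega>
    define c where "c \<omega> = pnl \<tau>s \<theta> CQ Q CP P q p h T \<omega> - pnl \<tau>s \<theta> CQ Q CP P q p h t \<omega>" for \<omega>
    have eq: "(\<lambda>\<omega>. Z T \<omega> - Z t \<omega>) = (\<lambda>\<omega>. (a \<omega> - b \<omega>) - c \<omega>)"
      by (rule ext) (simp add: Z_def a_def b_def c_def Y_def W_def from0_def stopped_def algebra_simps)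
    have ia: "integrable M a" unfolding a_def Y_def using ips t T1 by auto
    have ib: "integrable M b" unfolding b_def W_def using ips t T1 by auto
    have ic: "integrable M c" unfolding c_def using ipnl t T1 by auto
    have iab: "integrable M (\<lambda>\<omega>. a \<omega> - b \<omega>)" using ia ib by auto
    have 1: "AE \<omega> in M. real_cond_exp M (F t) (\<lambda>\<omega>. (a \<omega> - b \<omega>) - c \<omega>) \<omega>
              = real_cond_exp M (F t) (\<lambda>\<omega>. a \<omega> - b \<omega>) \<omega> - real_cond_exp M (F t) c \<omega>"
      by (rule sft.real_cond_exp_diff[OF iab ic])
    have 2: "AE \<omega> in M. real_cond_exp M (F t) (\<lambda>\<omega>. a \<omega> - b \<omega>) \<omega>
              = real_cond_exp M (F t) a \<omega> - real_cond_exp M (F t) b \<omega>"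
      by (rule sft.real_cond_exp_diff[OF ia ib])
    have 3: "AE \<omega> in M. real_cond_exp M (F t) a \<omega> = 0" using ceY[OF t] unfolding a_def .
    have 4: "AE \<omega> in M. real_cond_exp M (F t) b \<omega> = 0" using ceW[OF t] unfolding b_def .
    show "AE \<omega> in M. HVA M F T \<tau>s \<theta> CQ Q CP P q p h t \<omega> = va M F T Z t \<omega>"
      using 1 2 3 4
    proof eventually_elim
      case (elim \<omega>)
      have "va M F T Z t \<omega> = real_cond_exp M (F t) (\<lambda>\<omega>. (a \<omega> - b \<omega>) - c \<omega>) \<omega>"
        unfolding va_def eq ..
      also have "\<dots> = - real_cond_exp M (F t) c \<omega>" using elim by simp
      also have "\<dots> = HVA M F T \<tau>s \<theta> CQ Q CP P q p h t \<omega>"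
        unfolding HVA_def va_def c_def ..
      finally show ?case by simp
    qed
  qed
qed

end
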